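(* Let $f\colon\mathbb{R}^d\to\mathbb{R}\cup\{\infty\}$ be a lower semicontinuous convex function, let $Q\subseteq\mathbb{R}^d$ be a nonempty closed convex set contained in the domain of $f$, and assume the set $X^*$ of minimizers of $f$ over $Q$ is nonempty, with minimum value $f^*$. Suppose $f$ has $\mu$-quadratic growth for some $\mu>0$: $f(x)\ge f^*+\frac{\mu}{2}\mathrm{dist}(x,X^* )^2$ for all $x\in Q$. Let $g(x;\xi)$ be a stochastic subgradient oracle with $\mathbb{E}_{\xi\sim D}\,g(x;\xi)\in\partial f(x)$ for all $x\in Q$, and suppose there are constants $L_0,L_1\ge0$ with $$\mathbb{E}_\xi\|g(x;\xi)\|^2\le L_0^2+L_1(f(x)-f^* )\qquad\text{for all }x\in Q.$$ Let $x_0\in Q$ and consider $x_{k+1}=P_Q(x_k-\alpha_kg(x_k;\xi_k))$ with $\xi_k\sim D$ i.i.d. and $$\alpha_k=\frac{4}{\mu(k+2)+\frac{4L_1^2}{\mu(k+1)}}.$$ Then for every $T\ge0$, $$\mathbb{E}_{\xi_{0\dots T}}\left[f\left(\frac{\sum_{k=0}^T(k+1)(1-L_1\alpha_k)x_k}{\sum_{k=0}^T(k+1)(1-L_1\alpha_k)}\right)-f^*\right]\le\frac{4L_0^2(T+1)+L_1^2\,\mathrm{dist}(x_0,X^* )^2}{\mu\sum_{k=0}^T(k+1)(1-L_1\alpha_k)}.$$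
   Context: $\mathrm{dist}(x,X^* )$ is the Euclidean distance from $x$ to $X^*$. $P_Q$ is orthogonal projection onto $Q$; $\partial f(x)=\{g: f(y)\ge f(x)+g^T(y-x)\ \forall y\in\mathbb{R}^d\}$; $\mathbb{E}_{\xi_{0\dots T}}$ is expectation over the i.i.d. samples $\xi_0,\dots,\xi_T$. *)

theory Defs
  imports "HOL-Analysis.Analysis" "HOL-Probability.Probability"
begin

definition ereal_convex :: "('a::real_vector \<Rightarrow> ereal) \<Rightarrow> bool" where
  "ereal_convex f \<longleftrightarrow>
     (\<forall>x y. \<forall>t::real. 0 \<le> t \<and> t \<le> 1 \<longrightarrow>
        f ((1 - t) *\<^sub>R x + t *\<^sub>R y) \<le> ereal (1 - t) * f x + ereal t * f y)"

definition ereal_lsc :: "('a::topological_space \<Rightarrow> ereal) \<Rightarrow> bool" where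
  "ereal_lsc f \<longleftrightarrow> (\<forall>c. closed {x. f x \<le> c})"

definition subdiff :: "('a::real_inner \<Rightarrow> ereal) \<Rightarrow> 'a \<Rightarrow> 'a set" where
  "subdiff f x = {g. \<forall>y. f y \<ge> f x + ereal (inner g (y - x))}"

primrec psgd :: "'a::euclidean_space set \<Rightarrow> ('a \<Rightarrow> 'b \<Rightarrow> 'a) \<Rightarrow> (nat \<Rightarrow> real) \<Rightarrow> 'a
                 \<Rightarrow> (nat \<Rightarrow> 'b) \<Rightarrow> nat \<Rightarrow> 'a" where
  "psgd Q g \<alpha> x0 \<omega> 0 = x0"
| "psgd Q g \<alpha> x0 \<omega> (Suc k) =
     closest_point Q (psgd Q g \<alpha> x0 \<omega> k - \<alpha> k *\<^sub>R g (psgd Q g \<alpha> x0 \<omega> k) (\<omega> k))"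

end

theory Submission
  imports Defs
begin


lemma psgd_in:
  assumes "closed Q" "Q \<noteq> {}" "x0 \<in> Q"
  shows "psgd Q g \<alpha> x0 \<omega> k \<in> Q"
  using assms by (cases k) (auto intro: closest_point_in_set)

lemma psgd_cong:
  "(\<And>i. i < k \<Longrightarrow> \<omega> i = \<omega>' i) \<Longrightarrow> psgd Q g \<alpha> x0 \<omega> k = psgd Q g \<alpha> x0 \<omega>' k"
  by (induction k) auto

lemma psgd_meas:
  assumes g_meas: "(\<lambda>(x, \<xi>). g x \<xi>) \<in> borel_measurable (borel \<Otimes>\<^sub>M D)"
    and Q: "convex Q" "closed Q" "Q \<noteq> {}"
  shows "{..<k} \<subseteq> J \<Longrightarrow> (\<lambda>\<omega>. psgd Q g \<alpha> x0 \<omega> k) \<in> borel_measurable (PiM J (\<lambda>_. D))"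
proof (induction k)
  case 0 then show ?case by simp
next
  case (Suc k)
  have "{..<k} \<subseteq> J" using Suc.prems by auto
  then have IH: "(\<lambda>\<omega>. psgd Q g \<alpha> x0 \<omega> k) \<in> borel_measurable (PiM J (\<lambda>_. D))" using Suc.IH by blast
  have kJ: "k \<in> J" using Suc.prems by auto
  have c: "(\<lambda>\<omega>. \<omega> k) \<in> measurable (PiM J (\<lambda>_. D)) D"
    using measurable_component_singleton[OF kJ] .
  have p: "(\<lambda>\<omega>. (psgd Q g \<alpha> x0 \<omega> k, \<omega> k)) \<in> measurable (PiM J (\<lambda>_. D)) (borel \<Otimes>\<^sub>M D)"
    using IH c by (rule measurable_Pair)
  have gm: "(\<lambda>\<omega>. g (psgd Q g \<alpha> x0 \<omega> k) (\<omega> k)) \<in> borel_measurable (PiM J (\<lambda>_. D))"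
    using measurable_comp[OF p g_meas] by (simp add: comp_def)
  have "(\<lambda>\<omega>. psgd Q g \<alpha> x0 \<omega> k - \<alpha> k *\<^sub>R g (psgd Q g \<alpha> x0 \<omega> k) (\<omega> k)) \<in> borel_measurable (PiM J (\<lambda>_. D))"
    using IH gm by measurable
  then show ?case
    by (simp add: borel_measurable_continuous_on[OF continuous_on_closest_point[OF Q]])
qed

lemma pps: "prob_space D \<Longrightarrow> product_prob_space (\<lambda>_. D)"
  by (simp add: product_prob_space_def product_sigma_finite_def product_prob_space_axioms_def
      prob_space_imp_sigma_finite)

lemma nn_integral_PiM_restrict:
  fixes D :: "'b measure"
  assumes D: "prob_space D" and J: "finite J"
    and F: "F \<in> borel_measurable (PiM J (\<lambda>_. D))"
    and dep: "\<And>\<omega>. F \<omega> = F (restrict \<omega> J)"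
  shows "(\<integral>\<^sup>+\<omega>. F \<omega> \<partial>(PiM UNIV (\<lambda>_. D))) = (\<integral>\<^sup>+\<omega>. F \<omega> \<partial>(PiM J (\<lambda>_. D)))"
proof -
  interpret product_prob_space "\<lambda>_. D" UNIV using pps[OF D] by simp
  have e: "distr (PiM UNIV (\<lambda>_. D)) (PiM J (\<lambda>_. D)) (\<lambda>x. restrict x J) = PiM J (\<lambda>_. D)"
    using distr_PiM_restrict_finite[OF J] by simp
  have "(\<integral>\<^sup>+\<omega>. F \<omega> \<partial>(PiM J (\<lambda>_. D))) = (\<integral>\<^sup>+\<omega>. F (restrict \<omega> J) \<partial>(PiM UNIV (\<lambda>_. D)))"
  proof -
    have Fd: "F \<in> borel_measurable (distr (PiM UNIV (\<lambda>_. D)) (PiM J (\<lambda>_. D)) (\<lambda>x. restrict x J))"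
      using F by simp
    show ?thesis
      using nn_integral_distr[OF measurable_restrict_subset[OF subset_UNIV] Fd] e by simp
  qed
  then show ?thesis using dep by simp
qed

lemma key_step:
  fixes D :: "'b measure" and H :: "'a::euclidean_space \<Rightarrow> 'b \<Rightarrow> ennreal"
  assumes D: "prob_space D"
    and g_meas: "(\<lambda>(x, \<xi>). g x \<xi>) \<in> borel_measurable (borel \<Otimes>\<^sub>M D)"
    and Q: "convex Q" "closed Q" "Q \<noteq> {}"
    and H: "(\<lambda>(x,\<xi>). H x \<xi>) \<in> borel_measurable (borel \<Otimes>\<^sub>M D)"
  shows "(\<integral>\<^sup>+\<omega>. H (psgd Q g \<alpha> x0 \<omega> k) (\<omega> k) \<partial>(PiM UNIV (\<lambda>_. D)))
       = (\<integral>\<^sup>+\<omega>. (\<integral>\<^sup>+\<xi>. H (psgd Q g \<alpha> x0 \<omega> k) \<xi> \<partial>D) \<partial>(PiM UNIV (\<lambda>_. D)))"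
proof -
  interpret product_prob_space "\<lambda>_. D" UNIV using pps[OF D] by simp
  interpret Dp: prob_space D by (rule D)
  let ?X = "\<lambda>\<omega>. psgd Q g \<alpha> x0 \<omega> k"
  have Xm: "\<And>J. {..<k} \<subseteq> J \<Longrightarrow> ?X \<in> borel_measurable (PiM J (\<lambda>_. D))"
    using psgd_meas[OF g_meas Q] by blast
  have ins: "{..k} = insert k {..<k}" by auto
  have F: "(\<lambda>\<omega>. H (?X \<omega>) (\<omega> k)) \<in> borel_measurable (PiM {..k} (\<lambda>_. D))"
  proof -
    have p: "(\<lambda>\<omega>. (?X \<omega>, \<omega> k)) \<in> measurable (PiM {..k} (\<lambda>_. D)) (borel \<Otimes>\<^sub>M D)"
      by (rule measurable_Pair[OF Xm measurable_component_singleton]) auto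
    show ?thesis using measurable_comp[OF p H] by (simp add: comp_def)
  qed
  have G: "(\<lambda>\<omega>. \<integral>\<^sup>+\<xi>. H (?X \<omega>) \<xi> \<partial>D) \<in> borel_measurable (PiM {..<k} (\<lambda>_. D))"
  proof -
    have p: "(\<lambda>(\<omega>,\<xi>). (?X \<omega>, \<xi>)) \<in> measurable (PiM {..<k} (\<lambda>_. D) \<Otimes>\<^sub>M D) (borel \<Otimes>\<^sub>M D)"
      using measurable_Pair[OF measurable_comp[OF measurable_fst Xm[OF order_refl]] measurable_snd]
      by (simp add: comp_def case_prod_beta')
    have "(\<lambda>(\<omega>,\<xi>). H (?X \<omega>) \<xi>) \<in> borel_measurable (PiM {..<k} (\<lambda>_. D) \<Otimes>\<^sub>M D)"
      using measurable_comp[OF p H] by (simp add: comp_def case_prod_beta')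
    then show ?thesis
      by (rule sigma_finite_measure.borel_measurable_nn_integral[OF prob_space_imp_sigma_finite[OF D]])
  qed
  have "(\<integral>\<^sup>+\<omega>. H (?X \<omega>) (\<omega> k) \<partial>(PiM UNIV (\<lambda>_. D)))
      = (\<integral>\<^sup>+\<omega>. H (?X \<omega>) (\<omega> k) \<partial>(PiM {..k} (\<lambda>_. D)))"
    by (rule nn_integral_PiM_restrict[OF D _ F])
       (auto intro!: arg_cong2[where f=H] psgd_cong)
  also have "\<dots> = (\<integral>\<^sup>+\<omega>. H (?X \<omega>) (\<omega> k) \<partial>(PiM (insert k {..<k}) (\<lambda>_. D)))"
    by (simp add: ins)
  also have "\<dots> = (\<integral>\<^sup>+x. (\<integral>\<^sup>+y. H (?X (x(k := y))) ((x(k:=y)) k) \<partial>D) \<partial>(PiM {..<k} (\<lambda>_. D)))"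
    by (rule product_nn_integral_insert) (use F in \<open>auto simp: ins\<close>)
  also have "\<dots> = (\<integral>\<^sup>+x. (\<integral>\<^sup>+y. H (?X x) y \<partial>D) \<partial>(PiM {..<k} (\<lambda>_. D)))"
    by (intro nn_integral_cong arg_cong2[where f=H] psgd_cong) auto
  also have "\<dots> = (\<integral>\<^sup>+\<omega>. (\<integral>\<^sup>+\<xi>. H (?X \<omega>) \<xi> \<partial>D) \<partial>(PiM UNIV (\<lambda>_. D)))"
    by (rule nn_integral_PiM_restrict[OF D _ G, symmetric])
       (auto intro!: nn_integral_cong arg_cong2[where f=H] psgd_cong)
  finally show ?thesis .
qed



lemma inner_bound:
  fixes g :: "'b \<Rightarrow> 'a::euclidean_space"
  assumes D: "prob_space D" and gm: "g \<in> borel_measurable D" and gi: "integrable D g"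
    and mom: "(\<integral>\<^sup>+\<xi>. ennreal ((norm (g \<xi>))\<^sup>2) \<partial>D) \<le> ennreal M2"
  shows "integrable D (\<lambda>\<xi>. (norm (g \<xi>))\<^sup>2)"
    and "(\<integral>\<^sup>+\<xi>. ennreal ((norm (v - a *\<^sub>R g \<xi>))\<^sup>2) \<partial>D)
          = ennreal ((norm v)\<^sup>2 - 2*a*(v \<bullet> integral\<^sup>L D g) + a\<^sup>2 * (\<integral>\<xi>. (norm (g \<xi>))\<^sup>2 \<partial>D))"
    and "0 \<le> (norm v)\<^sup>2 - 2*a*(v \<bullet> integral\<^sup>L D g) + a\<^sup>2 * (\<integral>\<xi>. (norm (g \<xi>))\<^sup>2 \<partial>D)"
proof -
  interpret prob_space D by (rule D)
  show i2: "integrable D (\<lambda>\<xi>. (norm (g \<xi>))\<^sup>2)"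
  proof (rule integrableI_bounded)
    show "(\<lambda>\<xi>. (norm (g \<xi>))\<^sup>2) \<in> borel_measurable D" using gm by measurable
    have "(\<integral>\<^sup>+\<xi>. ennreal (norm ((norm (g \<xi>))\<^sup>2)) \<partial>D) = (\<integral>\<^sup>+\<xi>. ennreal ((norm (g \<xi>))\<^sup>2) \<partial>D)"
      by simp
    also have "\<dots> < \<infinity>" using mom by (simp add: le_less_trans)
    finally show "(\<integral>\<^sup>+\<xi>. ennreal (norm ((norm (g \<xi>))\<^sup>2)) \<partial>D) < \<infinity>" .
  qed
  define h where "h \<xi> = (norm v)\<^sup>2 - 2*a*(v \<bullet> g \<xi>) + a\<^sup>2 * (norm (g \<xi>))\<^sup>2" for \<xi>
  have eq: "(norm (v - a *\<^sub>R g \<xi>))\<^sup>2 = h \<xi>" for \<xi>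
  proof -
    have "(norm (v - a *\<^sub>R g \<xi>))\<^sup>2 = (v - a *\<^sub>R g \<xi>) \<bullet> (v - a *\<^sub>R g \<xi>)"
      by (rule power2_norm_eq_inner)
    also have "\<dots> = v \<bullet> v - 2*a*(v \<bullet> g \<xi>) + (a*a)*(g \<xi> \<bullet> g \<xi>)"
      by (simp add: inner_diff_left inner_diff_right inner_commute algebra_simps)
    also have "\<dots> = h \<xi>"
      by (simp only: h_def dot_square_norm) (simp add: power2_eq_square)
    finally show ?thesis .
  qed
  have hi: "integrable D h"
    unfolding h_def using i2 gi by (intro Bochner_Integration.integrable_add Bochner_Integration.integrable_diff
        integrable_mult_right integrable_inner_right) auto
  have ih: "integral\<^sup>L D h = (norm v)\<^sup>2 - 2*a*(v \<bullet> integral\<^sup>L D g) + a\<^sup>2 * (\<integral>\<xi>. (norm (g \<xi>))\<^sup>2 \<partial>D)"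
    unfolding h_def using i2 gi
    by (subst Bochner_Integration.integral_add, (auto intro!: integrable_inner_right)[2],
        subst Bochner_Integration.integral_diff, (auto intro!: integrable_inner_right)[2])
       (simp add: integral_inner_right prob_space)
  have hn: "0 \<le> h \<xi>" for \<xi> using eq[of \<xi>, symmetric] by simp
  show "(\<integral>\<^sup>+\<xi>. ennreal ((norm (v - a *\<^sub>R g \<xi>))\<^sup>2) \<partial>D)
          = ennreal ((norm v)\<^sup>2 - 2*a*(v \<bullet> integral\<^sup>L D g) + a\<^sup>2 * (\<integral>\<xi>. (norm (g \<xi>))\<^sup>2 \<partial>D))"
    unfolding eq ih[symmetric] using hi hn by (intro nn_integral_eq_integral) auto
  show "0 \<le> (norm v)\<^sup>2 - 2*a*(v \<bullet> integral\<^sup>L D g) + a\<^sup>2 * (\<integral>\<xi>. (norm (g \<xi>))\<^sup>2 \<partial>D)"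
    unfolding ih[symmetric] using hn by (intro integral_nonneg_AE) auto
qed

lemma real_step:
  fixes K a e s m d L0 L1 \<mu> :: real
  assumes K: "K > 0" and a: "a > 0" and s: "e \<le> s" and m: "m \<le> L0\<^sup>2 + L1 * e"
    and qg: "\<mu> / 2 * d\<^sup>2 \<le> e" and L1: "L1 \<ge> 0"
  shows "K * (1 - L1 * a) * e + (K / a) * (d\<^sup>2 - 2 * a * s + a\<^sup>2 * m)
         \<le> K * (1 / a - \<mu> / 2) * d\<^sup>2 + K * a * L0\<^sup>2"
proof -
  have "K * (1 - L1 * a) * e + (K / a) * (d\<^sup>2 - 2 * a * s + a\<^sup>2 * m)
      = K * (1 - L1 * a) * e + K * d\<^sup>2 / a - 2 * K * s + K * a * m"
    using a by (simp add: field_simps power2_eq_square)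
  also have "\<dots> \<le> K * (1 - L1 * a) * e + K * d\<^sup>2 / a - 2 * K * e + K * a * (L0\<^sup>2 + L1 * e)"
  proof -
    have "K * a * m \<le> K * a * (L0\<^sup>2 + L1 * e)"
      using K a m by (intro mult_left_mono) auto
    moreover have "2 * K * e \<le> 2 * K * s" using K s by simp
    ultimately show ?thesis by linarith
  qed
  also have "\<dots> = K * d\<^sup>2 / a - K * e + K * a * L0\<^sup>2"
    by (simp add: algebra_simps)
  also have "\<dots> \<le> K * d\<^sup>2 / a - K * (\<mu> / 2 * d\<^sup>2) + K * a * L0\<^sup>2"
    using K qg by (simp add: mult_left_mono)
  also have "\<dots> = K * (1 / a - \<mu> / 2) * d\<^sup>2 + K * a * L0\<^sup>2"
    by (simp add: algebra_simps)
  finally show ?thesis .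
qed



theorem theorem4p1:
  fixes f :: "'a::euclidean_space \<Rightarrow> ereal"
    and Q Xstar :: "'a set"
    and fstar \<mu> L0 L1 :: real
    and D :: "'b measure"
    and g :: "'a \<Rightarrow> 'b \<Rightarrow> 'a"
    and x0 :: 'a
    and \<alpha> :: "nat \<Rightarrow> real"
    and T :: nat
  assumes proper: "\<forall>x. f x \<noteq> -\<infinity>"
    and lsc: "ereal_lsc f"
    and cvx: "ereal_convex f"
    and Q_ne: "Q \<noteq> {}" and Q_closed: "closed Q" and Q_convex: "convex Q"
    and Q_dom: "\<forall>x\<in>Q. f x < \<infinity>"
    and Xstar_def: "Xstar = {x\<in>Q. \<forall>y\<in>Q. f x \<le> f y}"
    and Xstar_ne: "Xstar \<noteq> {}"
    and fstar_def: "\<forall>x\<in>Xstar. f x = ereal fstar"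
    and mu_pos: "\<mu> > 0"
    and qgrowth: "\<forall>x\<in>Q. f x \<ge> ereal (fstar + \<mu> / 2 * (infdist x Xstar)\<^sup>2)"
    and D_prob: "prob_space D"
    and g_meas: "(\<lambda>(x, \<xi>). g x \<xi>) \<in> borel_measurable (borel \<Otimes>\<^sub>M D)"
    and g_int: "\<forall>x\<in>Q. integrable D (g x)"
    and g_unbiased: "\<forall>x\<in>Q. (\<integral>\<xi>. g x \<xi> \<partial>D) \<in> subdiff f x"
    and L0_nonneg: "L0 \<ge> 0" and L1_nonneg: "L1 \<ge> 0"
    and g_second_moment: "\<forall>x\<in>Q. (\<integral>\<^sup>+ \<xi>. ennreal ((norm (g x \<xi>))\<^sup>2) \<partial>D)
                          \<le> ennreal (L0\<^sup>2 + L1 * (real_of_ereal (f x) - fstar))"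
    and x0_Q: "x0 \<in> Q"
    and step: "\<forall>k. \<alpha> k = 4 / (\<mu> * (real k + 2) + 4 * L1\<^sup>2 / (\<mu> * (real k + 1)))"
  shows "(\<integral>\<^sup>+ \<omega>. ennreal (real_of_ereal
            (f ((1 / (\<Sum>k\<le>T. (real k + 1) * (1 - L1 * \<alpha> k))) *\<^sub>R
                (\<Sum>k\<le>T. ((real k + 1) * (1 - L1 * \<alpha> k)) *\<^sub>R psgd Q g \<alpha> x0 \<omega> k))) - fstar)
          \<partial>(\<Pi>\<^sub>M i\<in>(UNIV::nat set). D))
       \<le> ennreal ((4 * L0\<^sup>2 * (real T + 1) + L1\<^sup>2 * (infdist x0 Xstar)\<^sup>2)
                  / (\<mu> * (\<Sum>k\<le>T. (real k + 1) * (1 - L1 * \<alpha> k))))"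
proof -
  interpret Dp: prob_space D by (rule D_prob)
  define M where "M = (\<Pi>\<^sub>M i\<in>(UNIV::nat set). D)"
  interpret Mp: prob_space M unfolding M_def by (rule prob_space_PiM) (rule D_prob)
  define F where "F x = real_of_ereal (f x)" for x
  define X where "X k \<omega> = psgd Q g \<alpha> x0 \<omega> k" for k \<omega>
  define d where "d x = infdist x Xstar" for x
  define \<beta> where "\<beta> k = \<mu> * (real k + 2) / 4 + L1\<^sup>2 / (\<mu> * (real k + 1))" for k :: nat
  define w where "w k = (real k + 1) * (1 - L1 * \<alpha> k)" for k
  define c where "c k = \<mu> * real k * (real k + 1) / 4 + L1\<^sup>2 / \<mu>" for k :: nat
  define b where "b k = (real k + 1) * \<alpha> k * L0\<^sup>2" for k
  define W where "W = (\<Sum>k\<le>T. w k)"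
  have \<beta>pos: "\<beta> k > 0" for k
    unfolding \<beta>_def using mu_pos by (intro add_pos_nonneg) auto
  have \<alpha>\<beta>: "\<alpha> k = 1 / \<beta> k" for k
    using step mu_pos unfolding \<beta>_def by (simp add: field_simps)
  have \<alpha>pos: "\<alpha> k > 0" for k using \<alpha>\<beta> \<beta>pos by simp
  have L1\<beta>: "L1 < \<beta> k" for k
  proof -
    define t where "t = \<mu> * (real k + 1)"
    have t: "t > 0" using mu_pos by (simp add: t_def)
    have "0 \<le> (t / 2 - L1)\<^sup>2 / t" using t by simp
    also have "(t / 2 - L1)\<^sup>2 / t = t / 4 + L1\<^sup>2 / t - L1"
      using t by (simp add: field_simps power2_eq_square)
    finally have "L1 \<le> t / 4 + L1\<^sup>2 / t" by simp
    moreover have "\<beta> k = t / 4 + \<mu> / 4 + L1\<^sup>2 / t"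
      unfolding \<beta>_def t_def by (simp add: field_simps)
    ultimately show ?thesis using mu_pos by simp
  qed
  have L1\<alpha>: "L1 * \<alpha> k < 1" for k
    using L1\<beta>[of k] \<beta>pos[of k] by (simp add: \<alpha>\<beta> field_simps)
  have w_nonneg: "w k \<ge> 0" for k unfolding w_def using L1\<alpha>[of k] by simp
  have W_pos: "W > 0"
  proof -
    have "w 0 > 0" unfolding w_def using L1\<alpha>[of 0] by simp
    moreover have "w 0 \<le> W" unfolding W_def
      by (rule member_le_sum) (auto intro: w_nonneg)
    ultimately show ?thesis by simp
  qed
  have gen: "\<And>t::real. t \<noteq> 0 \<Longrightarrow> t * (L1\<^sup>2 / (\<mu> * t)) = L1\<^sup>2 / \<mu>"
    using mu_pos by (simp add: field_simps)
  have c_suc: "c (Suc k) = (real k + 1) * \<beta> k" for k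
  proof -
    have "(real k + 1) * (L1\<^sup>2 / (\<mu> * (real k + 1))) = L1\<^sup>2 / \<mu>"
      by (rule gen) simp
    then show ?thesis unfolding c_def \<beta>_def by (simp add: algebra_simps)
  qed
  have c_eq: "c k = (real k + 1) * (1 / \<alpha> k - \<mu> / 2)" for k
  proof -
    have "(real k + 1) * (L1\<^sup>2 / (\<mu> * (real k + 1))) = L1\<^sup>2 / \<mu>"
      by (rule gen) simp
    then show ?thesis unfolding c_def \<alpha>\<beta> \<beta>_def by (simp add: algebra_simps) (simp add: field_simps)
  qed
  have c_nonneg: "c k \<ge> 0" for k unfolding c_def using mu_pos by simp
  have b_nonneg: "b k \<ge> 0" for k unfolding b_def using \<alpha>pos[of k] by simp
  have b_le: "b k \<le> 4 * L0\<^sup>2 / \<mu>" for k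
  proof -
    have "\<mu> * (real k + 1) \<le> 4 * \<beta> k"
      unfolding \<beta>_def using mu_pos by (simp add: field_simps)
    then have "(real k + 1) * \<alpha> k \<le> 4 / \<mu>"
      using \<beta>pos[of k] mu_pos by (simp add: \<alpha>\<beta> field_simps)
    then show ?thesis unfolding b_def
      using mult_right_mono[of "(real k + 1) * \<alpha> k" "4 / \<mu>" "L0\<^sup>2"] by simp
  qed
  obtain xs where xs: "xs \<in> Xstar" using Xstar_ne by auto
  have xsQ: "xs \<in> Q" using xs unfolding Xstar_def by blast
  have fxs: "f xs = ereal fstar" using xs fstar_def by blast
  have fin: "f x = ereal (F x)" if "x \<in> Q" for x
    using proper Q_dom that unfolding F_def by (cases "f x") auto
  have Xstar_eq: "Xstar = Q \<inter> {x. f x \<le> ereal fstar}"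
  proof
    show "Xstar \<subseteq> Q \<inter> {x. f x \<le> ereal fstar}"
      using xsQ fxs by (auto simp: Xstar_def)
    show "Q \<inter> {x. f x \<le> ereal fstar} \<subseteq> Xstar"
      using xs fxs by (auto simp: Xstar_def intro: order_trans)
  qed
  have Xclosed: "closed Xstar"
    unfolding Xstar_eq using Q_closed lsc by (auto simp: ereal_lsc_def intro!: closed_Int)
  have qg: "fstar + \<mu> / 2 * (d x)\<^sup>2 \<le> F x" if "x \<in> Q" for x
  proof -
    have "ereal (fstar + \<mu> / 2 * (infdist x Xstar)\<^sup>2) \<le> f x" using qgrowth that by blast
    then show ?thesis unfolding d_def fin[OF that] by simp
  qed
  have e_nonneg: "0 \<le> F x - fstar" if "x \<in> Q" for x
  proof -
    have "0 \<le> \<mu> / 2 * (d x)\<^sup>2" using mu_pos by simp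
    then show ?thesis using qg[OF that] by linarith
  qed
  have fmeas: "f \<in> borel_measurable borel"
    by (rule borel_measurableI_le) (use lsc in \<open>auto simp: ereal_lsc_def\<close>)
  have Fmeas: "F \<in> borel_measurable borel"
    unfolding F_def using fmeas by measurable
  have dcont: "continuous_on UNIV d"
    unfolding d_def by (intro continuous_intros)
  have Pcont: "continuous_on UNIV (closest_point Q)"
    by (rule continuous_on_closest_point[OF Q_convex Q_closed Q_ne])
  have Xin: "X k \<omega> \<in> Q" for k \<omega>
    unfolding X_def by (rule psgd_in[OF Q_closed Q_ne x0_Q])
  have Xmeas: "X k \<in> borel_measurable M" for k
    unfolding X_def M_def by (rule psgd_meas[OF g_meas Q_convex Q_closed Q_ne]) simp
  have X_Suc: "X (Suc k) \<omega> = closest_point Q (X k \<omega> - \<alpha> k *\<^sub>R g (X k \<omega>) (\<omega> k))" for k \<omega>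
    unfolding X_def by simp
  have gp: "(\<lambda>p. g (fst p) (snd p)) \<in> borel_measurable (borel \<Otimes>\<^sub>M D)"
    using g_meas by (simp add: case_prod_beta')
  have gx: "(\<lambda>\<xi>. g x \<xi>) \<in> borel_measurable D" for x
  proof -
    have "(\<lambda>\<xi>. (x, \<xi>)) \<in> measurable D (borel \<Otimes>\<^sub>M D)" by measurable
    from measurable_comp[OF this gp] show ?thesis by (simp add: comp_def)
  qed
  define H where "H k x \<xi> = ennreal (w k * (F x - fstar))
      + ennreal (c (Suc k)) * ennreal ((d (closest_point Q (x - \<alpha> k *\<^sub>R g x \<xi>)))\<^sup>2)" for k x \<xi>
  have Hmeas: "(\<lambda>(x, \<xi>). H k x \<xi>) \<in> borel_measurable (borel \<Otimes>\<^sub>M D)" for k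
  proof -
    have a: "(\<lambda>p. fst p - \<alpha> k *\<^sub>R g (fst p) (snd p)) \<in> borel_measurable (borel \<Otimes>\<^sub>M D)"
      using gp by measurable
    have b: "(\<lambda>p. (d (closest_point Q (fst p - \<alpha> k *\<^sub>R g (fst p) (snd p))))\<^sup>2) \<in> borel_measurable (borel \<Otimes>\<^sub>M D)"
      by (rule borel_measurable_continuous_on[OF _ a])
         (intro continuous_on_power continuous_on_compose2[OF dcont] Pcont continuous_on_id; simp)
    have e: "(\<lambda>p. F (fst p)) \<in> borel_measurable (borel \<Otimes>\<^sub>M D)"
      using Fmeas by measurable
    show ?thesis unfolding H_def case_prod_beta' using b e by measurable
  qed
  have perx: "(\<integral>\<^sup>+\<xi>. H k x \<xi> \<partial>D) \<le> ennreal (c k * (d x)\<^sup>2 + b k)" if xQ: "x \<in> Q" for k x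
  proof -
    obtain p where pX: "p \<in> Xstar" and dp: "d x = dist x p"
      using infdist_attains_inf[OF Xclosed Xstar_ne] unfolding d_def by metis
    have pQ: "p \<in> Q" using pX unfolding Xstar_def by blast
    have fp: "f p = ereal fstar" using pX fstar_def by blast
    define G where "G = (\<integral>\<xi>. g x \<xi> \<partial>D)"
    define e where "e = F x - fstar"
    have "G \<in> subdiff f x" using g_unbiased xQ unfolding G_def by auto
    then have "f p \<ge> f x + ereal (G \<bullet> (p - x))" by (auto simp: subdiff_def)
    then have "fstar \<ge> F x + G \<bullet> (p - x)" using fp fin[OF xQ] by simp
    then have es: "e \<le> (x - p) \<bullet> G" unfolding e_def by (simp add: inner_diff_left inner_diff_right inner_commute)
    have mom: "(\<integral>\<^sup>+\<xi>. ennreal ((norm (g x \<xi>))\<^sup>2) \<partial>D) \<le> ennreal (L0\<^sup>2 + L1 * e)"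
      using g_second_moment xQ unfolding e_def F_def by auto
    have e0: "0 \<le> e" unfolding e_def by (rule e_nonneg[OF xQ])
    have M2nn: "0 \<le> L0\<^sup>2 + L1 * e" using e0 L1_nonneg by simp
    have gi: "integrable D (g x)" using g_int xQ by auto
    note ib1 = inner_bound(1)[OF D_prob gx gi mom]
    note ib2 = inner_bound(2)[OF D_prob gx gi mom, of "x - p" "\<alpha> k"]
    note ib3 = inner_bound(3)[OF D_prob gx gi mom, of "x - p" "\<alpha> k"]
    define m where "m = (\<integral>\<xi>. (norm (g x \<xi>))\<^sup>2 \<partial>D)"
    define Z where "Z = (norm (x - p))\<^sup>2 - 2 * \<alpha> k * ((x - p) \<bullet> G) + (\<alpha> k)\<^sup>2 * m"
    have Zeq: "(\<integral>\<^sup>+\<xi>. ennreal ((norm (x - p - \<alpha> k *\<^sub>R g x \<xi>))\<^sup>2) \<partial>D) = ennreal Z"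
      using ib2 unfolding Z_def m_def G_def .
    have Z0: "0 \<le> Z" using ib3 unfolding Z_def m_def G_def .
    have mle: "m \<le> L0\<^sup>2 + L1 * e"
    proof -
      have em: "ennreal m = (\<integral>\<^sup>+\<xi>. ennreal ((norm (g x \<xi>))\<^sup>2) \<partial>D)"
        unfolding m_def using ib1 by (intro nn_integral_eq_integral[symmetric]) auto
      have "ennreal m \<le> ennreal (L0\<^sup>2 + L1 * e)" unfolding em by (rule mom)
      then show ?thesis using M2nn ennreal_le_iff by blast
    qed
    have pw: "ennreal ((d (closest_point Q (x - \<alpha> k *\<^sub>R g x \<xi>)))\<^sup>2)
              \<le> ennreal ((norm (x - p - \<alpha> k *\<^sub>R g x \<xi>))\<^sup>2)" for \<xi>
    proof -
      let ?y = "x - \<alpha> k *\<^sub>R g x \<xi>"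
      have "d (closest_point Q ?y) \<le> dist (closest_point Q ?y) p"
        unfolding d_def by (rule infdist_le[OF pX])
      also have "\<dots> = dist (closest_point Q ?y) (closest_point Q p)"
        using closest_point_self[OF pQ] by simp
      also have "\<dots> \<le> dist ?y p"
        by (rule closest_point_lipschitz[OF Q_convex Q_closed Q_ne])
      also have "\<dots> = norm (x - p - \<alpha> k *\<^sub>R g x \<xi>)"
        by (simp add: dist_norm algebra_simps)
      finally have "d (closest_point Q ?y) \<le> norm (x - p - \<alpha> k *\<^sub>R g x \<xi>)" .
      moreover have "0 \<le> d (closest_point Q ?y)" unfolding d_def by (rule infdist_nonneg)
      ultimately show ?thesis by (simp add: power_mono)
    qed
    have dmeas: "(\<lambda>\<xi>. ennreal ((d (closest_point Q (x - \<alpha> k *\<^sub>R g x \<xi>)))\<^sup>2)) \<in> borel_measurable D"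
    proof -
      have a: "(\<lambda>\<xi>. x - \<alpha> k *\<^sub>R g x \<xi>) \<in> borel_measurable D" using gx[of x] by measurable
      have "(\<lambda>\<xi>. (d (closest_point Q (x - \<alpha> k *\<^sub>R g x \<xi>)))\<^sup>2) \<in> borel_measurable D"
        by (rule borel_measurable_continuous_on[OF _ a])
           (intro continuous_on_power continuous_on_compose2[OF dcont] Pcont continuous_on_id; simp)
      then show ?thesis by measurable
    qed
    have "(\<integral>\<^sup>+\<xi>. H k x \<xi> \<partial>D) = ennreal (w k * e)
        + ennreal (c (Suc k)) * (\<integral>\<^sup>+\<xi>. ennreal ((d (closest_point Q (x - \<alpha> k *\<^sub>R g x \<xi>)))\<^sup>2) \<partial>D)"
      unfolding H_def e_def
      by (subst nn_integral_add) (use dmeas in \<open>auto simp: nn_integral_cmult Dp.emeasure_space_1\<close>)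
    also have "\<dots> \<le> ennreal (w k * e) + ennreal (c (Suc k)) * ennreal Z"
      unfolding Zeq[symmetric]
      by (intro add_left_mono mult_left_mono nn_integral_mono pw) auto
    also have "\<dots> = ennreal (w k * e + c (Suc k) * Z)"
      using w_nonneg[of k] e0 c_nonneg[of "Suc k"] Z0 by (simp add: ennreal_mult)
    also have "\<dots> \<le> ennreal (c k * (d x)\<^sup>2 + b k)"
    proof (rule ennreal_leI)
      have K: "(0::real) < real k + 1" by simp
      have dd: "d x = norm (x - p)" using dp by (simp add: dist_norm)
      have qgx: "\<mu> / 2 * (norm (x - p))\<^sup>2 \<le> e" using qg[OF xQ] unfolding e_def dd by simp
      have "(real k + 1) * (1 - L1 * \<alpha> k) * e + ((real k + 1) / \<alpha> k) * Z
            \<le> (real k + 1) * (1 / \<alpha> k - \<mu> / 2) * (norm (x - p))\<^sup>2 + (real k + 1) * \<alpha> k * L0\<^sup>2"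
        unfolding Z_def by (rule real_step[OF K \<alpha>pos es mle qgx L1_nonneg])
      moreover have "c (Suc k) = (real k + 1) / \<alpha> k" using c_suc \<alpha>\<beta> \<beta>pos[of k] by simp
      ultimately show "w k * e + c (Suc k) * Z \<le> c k * (d x)\<^sup>2 + b k"
        unfolding w_def c_eq b_def dd by simp
    qed
    finally show ?thesis .
  qed
  define R where "R k = (\<integral>\<^sup>+\<omega>. ennreal ((d (X k \<omega>))\<^sup>2) \<partial>M)" for k
  define E where "E k = (\<integral>\<^sup>+\<omega>. ennreal (w k * (F (X k \<omega>) - fstar)) \<partial>M)" for k
  have Rmeas: "(\<lambda>\<omega>. ennreal ((d (X k \<omega>))\<^sup>2)) \<in> borel_measurable M" for k
  proof -
    have "(\<lambda>\<omega>. (d (X k \<omega>))\<^sup>2) \<in> borel_measurable M"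
      by (rule borel_measurable_continuous_on[OF _ Xmeas])
         (intro continuous_on_power dcont continuous_on_id)
    then show ?thesis by measurable
  qed
  have Emeas: "(\<lambda>\<omega>. ennreal (w k * (F (X k \<omega>) - fstar))) \<in> borel_measurable M" for k
    using measurable_comp[OF Xmeas Fmeas] by (simp add: comp_def)
  have stepineq: "E k + ennreal (c (Suc k)) * R (Suc k) \<le> ennreal (c k) * R k + ennreal (b k)" for k
  proof -
    have "E k + ennreal (c (Suc k)) * R (Suc k) = (\<integral>\<^sup>+\<omega>. H k (X k \<omega>) (\<omega> k) \<partial>M)"
      unfolding E_def R_def H_def X_Suc
      by (subst nn_integral_add) (use Emeas Rmeas[of "Suc k"] in \<open>auto simp: nn_integral_cmult X_Suc\<close>)
    also have "\<dots> = (\<integral>\<^sup>+\<omega>. (\<integral>\<^sup>+\<xi>. H k (X k \<omega>) \<xi> \<partial>D) \<partial>M)"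
      unfolding M_def X_def by (rule key_step[OF D_prob g_meas Q_convex Q_closed Q_ne Hmeas])
    also have "\<dots> \<le> (\<integral>\<^sup>+\<omega>. ennreal (c k * (d (X k \<omega>))\<^sup>2 + b k) \<partial>M)"
      by (intro nn_integral_mono perx Xin)
    also have "\<dots> = (\<integral>\<^sup>+\<omega>. ennreal (c k) * ennreal ((d (X k \<omega>))\<^sup>2) + ennreal (b k) \<partial>M)"
      using c_nonneg[of k] b_nonneg[of k] by (intro nn_integral_cong) (simp add: ennreal_mult)
    also have "\<dots> = ennreal (c k) * R k + ennreal (b k)"
      unfolding R_def
      by (subst nn_integral_add) (use Rmeas[of k] in \<open>auto simp: nn_integral_cmult Mp.emeasure_space_1\<close>)
    finally show ?thesis .
  qed
  have telescope: "(\<Sum>k<n. E k) + ennreal (c n) * R n \<le> ennreal (c 0) * R 0 + (\<Sum>k<n. ennreal (b k))" for n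
  proof (induction n)
    case 0 then show ?case by simp
  next
    case (Suc n)
    have "(\<Sum>k<Suc n. E k) + ennreal (c (Suc n)) * R (Suc n)
        = (\<Sum>k<n. E k) + (E n + ennreal (c (Suc n)) * R (Suc n))" by (simp add: add.assoc)
    also have "\<dots> \<le> (\<Sum>k<n. E k) + (ennreal (c n) * R n + ennreal (b n))"
      by (intro add_left_mono stepineq)
    also have "\<dots> = ((\<Sum>k<n. E k) + ennreal (c n) * R n) + ennreal (b n)" by (simp add: add.assoc)
    also have "\<dots> \<le> (ennreal (c 0) * R 0 + (\<Sum>k<n. ennreal (b k))) + ennreal (b n)"
      by (intro add_right_mono Suc.IH)
    also have "\<dots> = ennreal (c 0) * R 0 + (\<Sum>k<Suc n. ennreal (b k))" by (simp add: add.assoc)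
    finally show ?case .
  qed
  have R0: "R 0 = ennreal ((d x0)\<^sup>2)"
    unfolding R_def X_def by (simp add: Mp.emeasure_space_1)
  have sumE: "(\<Sum>k\<le>T. E k) \<le> ennreal (L1\<^sup>2 / \<mu> * (d x0)\<^sup>2 + (real T + 1) * (4 * L0\<^sup>2 / \<mu>))"
  proof -
    have "(\<Sum>k\<le>T. E k) \<le> (\<Sum>k<Suc T. E k) + ennreal (c (Suc T)) * R (Suc T)"
      by (simp add: lessThan_Suc_atMost)
    also have "\<dots> \<le> ennreal (c 0) * R 0 + (\<Sum>k<Suc T. ennreal (b k))" by (rule telescope)
    also have "\<dots> = ennreal (c 0 * (d x0)\<^sup>2 + (\<Sum>k\<le>T. b k))"
      using c_nonneg[of 0] b_nonneg
      by (simp add: R0 ennreal_mult lessThan_Suc_atMost sum_nonneg)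
    also have "\<dots> \<le> ennreal (L1\<^sup>2 / \<mu> * (d x0)\<^sup>2 + (real T + 1) * (4 * L0\<^sup>2 / \<mu>))"
    proof (rule ennreal_leI)
      have "(\<Sum>k\<le>T. b k) \<le> of_nat (card {..T}) * (4 * L0\<^sup>2 / \<mu>)"
        by (rule sum_bounded_above) (rule b_le)
      then show "c 0 * (d x0)\<^sup>2 + (\<Sum>k\<le>T. b k) \<le> L1\<^sup>2 / \<mu> * (d x0)\<^sup>2 + (real T + 1) * (4 * L0\<^sup>2 / \<mu>)"
        by (simp add: c_def add.commute)
    qed
    finally show ?thesis .
  qed
  have cvxF: "convex_on Q F"
  proof (rule convex_onI[OF _ Q_convex])
    fix t :: real and x y assume t: "0 < t" "t < 1" and xy: "x \<in> Q" "y \<in> Q"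
    have zQ: "(1 - t) *\<^sub>R x + t *\<^sub>R y \<in> Q"
      using Q_convex xy t by (simp add: convex_alt)
    have "f ((1 - t) *\<^sub>R x + t *\<^sub>R y) \<le> ereal (1 - t) * f x + ereal t * f y"
      using cvx t unfolding ereal_convex_def by auto
    then show "F ((1 - t) *\<^sub>R x + t *\<^sub>R y) \<le> (1 - t) * F x + t * F y"
      using fin[OF zQ] fin[OF xy(1)] fin[OF xy(2)] by simp
  qed
  have pointwise: "ennreal (real_of_ereal (f ((1 / W) *\<^sub>R (\<Sum>k\<le>T. w k *\<^sub>R X k \<omega>))) - fstar)
      \<le> ennreal (1 / W) * (\<Sum>k\<le>T. ennreal (w k * (F (X k \<omega>) - fstar)))" for \<omega>
  proof -
    have avg: "(1 / W) *\<^sub>R (\<Sum>k\<le>T. w k *\<^sub>R X k \<omega>) = (\<Sum>k\<le>T. (w k / W) *\<^sub>R X k \<omega>)"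
      by (simp add: scaleR_sum_right)
    have s1: "(\<Sum>k\<le>T. w k / W) = 1" using W_pos unfolding W_def by (simp add: sum_divide_distrib[symmetric])
    have "F (\<Sum>k\<le>T. (w k / W) *\<^sub>R X k \<omega>) \<le> (\<Sum>k\<le>T. (w k / W) * F (X k \<omega>))"
      by (rule convex_on_sum[OF _ _ cvxF s1]) (use w_nonneg W_pos Xin in auto)
    then have "F (\<Sum>k\<le>T. (w k / W) *\<^sub>R X k \<omega>) - fstar \<le> (\<Sum>k\<le>T. (w k / W) * (F (X k \<omega>) - fstar))"
    proof -
      have "(\<Sum>k\<le>T. (w k / W) * (F (X k \<omega>) - fstar))
          = (\<Sum>k\<le>T. (w k / W) * F (X k \<omega>)) - (\<Sum>k\<le>T. w k / W) * fstar"
        by (simp add: right_diff_distrib sum_subtractf sum_distrib_right)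
      then show ?thesis using s1 \<open>F (\<Sum>k\<le>T. (w k / W) *\<^sub>R X k \<omega>) \<le> (\<Sum>k\<le>T. (w k / W) * F (X k \<omega>))\<close>
        by simp
    qed
    also have "\<dots> = (1 / W) * (\<Sum>k\<le>T. w k * (F (X k \<omega>) - fstar))"
      by (simp add: sum_distrib_left)
    finally have le: "F ((1 / W) *\<^sub>R (\<Sum>k\<le>T. w k *\<^sub>R X k \<omega>)) - fstar
        \<le> (1 / W) * (\<Sum>k\<le>T. w k * (F (X k \<omega>) - fstar))" unfolding avg .
    have nn: "0 \<le> w k * (F (X k \<omega>) - fstar)" for k
      using w_nonneg[of k] e_nonneg[OF Xin] by simp
    have "ennreal (F ((1 / W) *\<^sub>R (\<Sum>k\<le>T. w k *\<^sub>R X k \<omega>)) - fstar)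
        \<le> ennreal ((1 / W) * (\<Sum>k\<le>T. w k * (F (X k \<omega>) - fstar)))"
      by (rule ennreal_leI[OF le])
    also have "\<dots> = ennreal (1 / W) * ennreal (\<Sum>k\<le>T. w k * (F (X k \<omega>) - fstar))"
      by (rule ennreal_mult') (use W_pos in simp)
    also have "\<dots> = ennreal (1 / W) * (\<Sum>k\<le>T. ennreal (w k * (F (X k \<omega>) - fstar)))"
      using nn by simp
    finally show ?thesis unfolding F_def .
  qed
  have "(\<integral>\<^sup>+ \<omega>. ennreal (real_of_ereal
            (f ((1 / W) *\<^sub>R (\<Sum>k\<le>T. w k *\<^sub>R X k \<omega>))) - fstar) \<partial>M)
      \<le> (\<integral>\<^sup>+ \<omega>. ennreal (1 / W) * (\<Sum>k\<le>T. ennreal (w k * (F (X k \<omega>) - fstar))) \<partial>M)"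
    by (intro nn_integral_mono pointwise)
  also have "\<dots> = ennreal (1 / W) * (\<Sum>k\<le>T. E k)"
    unfolding E_def using Emeas
    by (subst nn_integral_cmult) (auto simp: nn_integral_sum)
  also have "\<dots> \<le> ennreal (1 / W) * ennreal (L1\<^sup>2 / \<mu> * (d x0)\<^sup>2 + (real T + 1) * (4 * L0\<^sup>2 / \<mu>))"
    by (intro mult_left_mono sumE) auto
  also have "\<dots> = ennreal ((4 * L0\<^sup>2 * (real T + 1) + L1\<^sup>2 * (d x0)\<^sup>2) / (\<mu> * W))"
  proof -
    have "(1 / W) * (L1\<^sup>2 / \<mu> * (d x0)\<^sup>2 + (real T + 1) * (4 * L0\<^sup>2 / \<mu>))
        = (4 * L0\<^sup>2 * (real T + 1) + L1\<^sup>2 * (d x0)\<^sup>2) / (\<mu> * W)"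
      using W_pos mu_pos by (simp add: field_simps)
    moreover have "ennreal (1 / W) * ennreal (L1\<^sup>2 / \<mu> * (d x0)\<^sup>2 + (real T + 1) * (4 * L0\<^sup>2 / \<mu>))
        = ennreal ((1 / W) * (L1\<^sup>2 / \<mu> * (d x0)\<^sup>2 + (real T + 1) * (4 * L0\<^sup>2 / \<mu>)))"
      by (rule ennreal_mult'[symmetric]) (use W_pos in simp)
    ultimately show ?thesis by simp
  qed
  finally show ?thesis unfolding M_def X_def W_def w_def d_def .
qed

end
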